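(* Let $\theta_1,\dots,\theta_{10}$ be real numbers such that $0<\theta_i<\theta_j<\theta_k<180$ for each of the triples $(i,j,k)\in\{(2,4,6),(1,5,9),(1,5,10),(1,5,7),(1,3,7),(1,4,7),(3,5,8),(2,8,9),(6,7,10)\}$, and write $s_{ij}=\sin(\theta_j-\theta_i)$. Suppose $$s_{89}\,s_{1,10}\,s_{24}\,s_{35}\,s_{67}+s_{46}\,s_{19}\,s_{7,10}\,s_{35}\,s_{28}-s_{46}\,s_{38}\,s_{7,10}\,s_{29}\,s_{15}<0 .$$ Then the $9\times 8$ matrix $$S_9=\begin{pmatrix} 0&-s_{58}&0&s_{38}&0&-s_{35}&0&0\\ -s_{89}&0&0&0&0&s_{29}&-s_{28}&0\\ s_{46}&0&-s_{26}&0&s_{24}&0&0&0\\ 0&0&0&0&-s_{7,10}&0&0&-s_{67}\\ 0&s_{17}&0&0&0&0&0&0\\ 0&0&s_{17}&0&0&0&0&0\\ 0&0&0&-s_{19}&0&0&s_{15}&0\\ 0&0&0&-s_{1,10}&0&0&0&s_{15}\\ 0&0&0&-s_{17}&0&0&0&0 \end{pmatrix}$$ is a simplex.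
   Context: Angles are in degrees. A real matrix with $r+1$ rows and $r$ columns is called a simplex if, up to multiplication by a constant, there is precisely one positive linear dependency between its rows, i.e. there is a linear dependency among the rows with all coefficients strictly positive, and every linear dependency among the rows is a scalar multiple of it. (The columns of $S_9$ correspond to the unknowns $r_2,r_3,r_4,r_5,r_6,r_8,r_9,r_{10}$ in the triangle inequalities of a ten-line arrangement.) *)

theory Defs
  imports Complex_Main
begin

text \<open>A real matrix with m rows and n columns is represented as a function
  A :: nat => nat => real, where A i j is the entry in row i, column j
  (0-based, i < m, j < n).\<close>

definition row_dependency :: "nat \<Rightarrow> nat \<Rightarrow> (nat \<Rightarrow> nat \<Rightarrow> real) \<Rightarrow> (nat \<Rightarrow> real) \<Rightarrow> bool" where
  "row_dependency m n A c \<longleftrightarrow> (\<forall>j<n. (\<Sum>i<m. c i * A i j) = 0)"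

definition simplex :: "nat \<Rightarrow> (nat \<Rightarrow> nat \<Rightarrow> real) \<Rightarrow> bool" where
  "simplex r A \<longleftrightarrow>
     (\<exists>c. row_dependency (r+1) r A c \<and> (\<forall>i<r+1. c i > 0) \<and>
          (\<forall>d. row_dependency (r+1) r A d \<longrightarrow> (\<exists>t. \<forall>i<r+1. d i = t * c i)))"

definition sdeg :: "(nat \<Rightarrow> real) \<Rightarrow> nat \<Rightarrow> nat \<Rightarrow> real" where
  "sdeg \<theta> i j = sin ((\<theta> j - \<theta> i) * pi / 180)"

definition S9_rows :: "(nat \<Rightarrow> real) \<Rightarrow> real list list" where
  "S9_rows \<theta> = (let s = sdeg \<theta> in
    [[0, - s 5 8, 0, s 3 8, 0, - s 3 5, 0, 0],
     [- s 8 9, 0, 0, 0, 0, s 2 9, - s 2 8, 0],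
     [s 4 6, 0, - s 2 6, 0, s 2 4, 0, 0, 0],
     [0, 0, 0, 0, - s 7 10, 0, 0, - s 6 7],
     [0, s 1 7, 0, 0, 0, 0, 0, 0],
     [0, 0, s 1 7, 0, 0, 0, 0, 0],
     [0, 0, 0, - s 1 9, 0, 0, s 1 5, 0],
     [0, 0, 0, - s 1 10, 0, 0, 0, s 1 5],
     [0, 0, 0, - s 1 7, 0, 0, 0, 0]])"

definition S9 :: "(nat \<Rightarrow> real) \<Rightarrow> nat \<Rightarrow> nat \<Rightarrow> real" where
  "S9 \<theta> i j = S9_rows \<theta> ! i ! j"

end

theory Submission
  imports Defs
begin

lemma all8: "(\<forall>j<(8::nat). P j) \<longleftrightarrow> P 0 \<and> P 1 \<and> P 2 \<and> P 3 \<and> P 4 \<and> P 5 \<and> P 6 \<and> P 7"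
  by (simp add: numeral_eq_Suc All_less_Suc2)

lemma all9: "(\<forall>j<(9::nat). P j) \<longleftrightarrow> P 0 \<and> P 1 \<and> P 2 \<and> P 3 \<and> P 4 \<and> P 5 \<and> P 6 \<and> P 7 \<and> P 8"
  by (simp add: numeral_eq_Suc All_less_Suc2)

lemma sum9: "(\<Sum>i<(9::nat). f i) = f 0 + f 1 + f 2 + f 3 + f 4 + f 5 + f 6 + f 7 + (f 8::real)"
  by (simp add: numeral_eq_Suc lessThan_Suc)

lemma col0: "(\<Sum>i<9. c i * S9 \<theta> i 0) = - c 1 * sdeg \<theta> 8 9 + c 2 * sdeg \<theta> 4 6"
  unfolding sum9 by (simp add: S9_def S9_rows_def Let_def algebra_simps)

lemma col1: "(\<Sum>i<9. c i * S9 \<theta> i 1) = - c 0 * sdeg \<theta> 5 8 + c 4 * sdeg \<theta> 1 7"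
  unfolding sum9 by (simp add: S9_def S9_rows_def Let_def algebra_simps)

lemma col2: "(\<Sum>i<9. c i * S9 \<theta> i 2) = - c 2 * sdeg \<theta> 2 6 + c 5 * sdeg \<theta> 1 7"
  unfolding sum9 by (simp add: S9_def S9_rows_def Let_def algebra_simps)

lemma col3: "(\<Sum>i<9. c i * S9 \<theta> i 3) = c 0 * sdeg \<theta> 3 8 - c 6 * sdeg \<theta> 1 9 - c 7 * sdeg \<theta> 1 10 - c 8 * sdeg \<theta> 1 7"
  unfolding sum9 by (simp add: S9_def S9_rows_def Let_def algebra_simps)

lemma col4: "(\<Sum>i<9. c i * S9 \<theta> i 4) = c 2 * sdeg \<theta> 2 4 - c 3 * sdeg \<theta> 7 10"
  unfolding sum9 by (simp add: S9_def S9_rows_def Let_def algebra_simps)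

lemma col5: "(\<Sum>i<9. c i * S9 \<theta> i 5) = - c 0 * sdeg \<theta> 3 5 + c 1 * sdeg \<theta> 2 9"
  unfolding sum9 by (simp add: S9_def S9_rows_def Let_def algebra_simps)

lemma col6: "(\<Sum>i<9. c i * S9 \<theta> i 6) = - c 1 * sdeg \<theta> 2 8 + c 6 * sdeg \<theta> 1 5"
  unfolding sum9 by (simp add: S9_def S9_rows_def Let_def algebra_simps)

lemma col7: "(\<Sum>i<9. c i * S9 \<theta> i 7) = - c 3 * sdeg \<theta> 6 7 + c 7 * sdeg \<theta> 1 5"
  unfolding sum9 by (simp add: S9_def S9_rows_def Let_def algebra_simps)

lemma spos:
  assumes "\<theta> i < \<theta> j" "\<theta> j - \<theta> i < 180"
  shows "0 < sdeg \<theta> i j"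
proof -
  have "(\<theta> j - \<theta> i) * pi < 180 * pi" using assms by (intro mult_strict_right_mono) auto
  then show ?thesis unfolding sdeg_def
    by (intro sin_gt_zero) (use assms in \<open>auto simp: field_simps\<close>)
qed

definition eqs :: "real \<Rightarrow> real \<Rightarrow> real \<Rightarrow> real \<Rightarrow> real \<Rightarrow> real \<Rightarrow> real \<Rightarrow> real \<Rightarrow> real
   \<Rightarrow> real \<Rightarrow> real \<Rightarrow> real \<Rightarrow> real \<Rightarrow> real \<Rightarrow> real \<Rightarrow> (nat \<Rightarrow> real) \<Rightarrow> bool" where
 "eqs s58 s38 s35 s89 s29 s28 s46 s26 s24 s710 s67 s17 s19 s15 s110 c \<longleftrightarrow>
   - c 1 * s89 + c 2 * s46 = 0 \<and>
   - c 0 * s58 + c 4 * s17 = 0 \<and>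
   - c 2 * s26 + c 5 * s17 = 0 \<and>
   c 0 * s38 - c 6 * s19 - c 7 * s110 - c 8 * s17 = 0 \<and>
   c 2 * s24 - c 3 * s710 = 0 \<and>
   - c 0 * s35 + c 1 * s29 = 0 \<and>
   - c 1 * s28 + c 6 * s15 = 0 \<and>
   - c 3 * s67 + c 7 * s15 = 0"

lemma key:
  fixes s58 s38 s35 s89 s29 s28 s46 s26 s24 s710 s67 s17 s19 s15 s110 :: real
  assumes pos: "0<s58" "0<s38" "0<s35" "0<s89" "0<s29" "0<s28" "0<s46" "0<s26" "0<s24"
     "0<s710" "0<s67" "0<s17" "0<s19" "0<s15" "0<s110"
  and neg: "s89 * s110 * s24 * s35 * s67 + s46 * s19 * s710 * s35 * s28
            - s46 * s38 * s710 * s29 * s15 < 0"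
  shows "\<exists>c. eqs s58 s38 s35 s89 s29 s28 s46 s26 s24 s710 s67 s17 s19 s15 s110 c \<and> (\<forall>i<9. c i > 0) \<and>
     (\<forall>d. eqs s58 s38 s35 s89 s29 s28 s46 s26 s24 s710 s67 s17 s19 s15 s110 d \<longrightarrow> (\<exists>t. \<forall>i<9. d i = t * c i))"
proof -
  define c1 where "c1 = s35 / s29"
  define c2 where "c2 = c1 * s89 / s46"
  define c3 where "c3 = c2 * s24 / s710"
  define c4 where "c4 = s58 / s17"
  define c5 where "c5 = c2 * s26 / s17"
  define c6 where "c6 = c1 * s28 / s15"
  define c7 where "c7 = c3 * s67 / s15"
  define c8 where "c8 = (s38 - c6 * s19 - c7 * s110) / s17"
  define c where "c = (\<lambda>i. [1, c1, c2, c3, c4, c5, c6, c7, c8] ! i)"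
  have k1: "c1*s29 = s35" using pos by (simp add: c1_def)
  have k2: "c2*s46 = c1*s89" using pos by (simp add: c2_def)
  have k3: "c3*s710 = c2*s24" using pos by (simp add: c3_def)
  have k4: "c4*s17 = s58" using pos by (simp add: c4_def)
  have k5: "c5*s17 = c2*s26" using pos by (simp add: c5_def)
  have k6: "c6*s15 = c1*s28" using pos by (simp add: c6_def)
  have k7: "c7*s15 = c3*s67" using pos by (simp add: c7_def)
  have k8: "c8*s17 = s38 - c6 * s19 - c7 * s110" using pos by (simp add: c8_def)
  have p1: "c1 > 0" "c2 > 0" "c3 > 0" "c4 > 0" "c5 > 0" "c6 > 0" "c7 > 0"
    using pos by (simp_all add: c1_def c2_def c3_def c4_def c5_def c6_def c7_def)
  define D where "D = s29 * s46 * s710 * s15"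
  have "c6*D = (c6*s15)*s29*s46*s710" by (simp add: D_def mult_ac)
  also have "\<dots> = (c1*s29)*s28*s46*s710" unfolding k6 by (simp add: mult_ac)
  finally have g6: "c6*D = s35*s28*s46*s710" unfolding k1 by (simp add: mult_ac)
  have "c7*D = (c7*s15)*s29*s46*s710" by (simp add: D_def mult_ac)
  also have "\<dots> = (c3*s710)*s67*s29*s46" unfolding k7 by (simp add: mult_ac)
  also have "\<dots> = (c2*s46)*s24*s67*s29" unfolding k3 by (simp add: mult_ac)
  also have "\<dots> = (c1*s29)*s89*s24*s67" unfolding k2 by (simp add: mult_ac)
  finally have g7: "c7*D = s35*s89*s24*s67" unfolding k1 by (simp add: mult_ac)
  have Dp: "D > 0" using pos by (simp add: D_def)
  have "(c8*s17)*D = s38*D - (c6*D)*s19 - (c7*D)*s110" unfolding k8 by (simp add: algebra_simps)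
  also have "\<dots> = - (s89 * s110 * s24 * s35 * s67 + s46 * s19 * s710 * s35 * s28
            - s46 * s38 * s710 * s29 * s15)" by (simp only: g6 g7) (simp add: D_def algebra_simps)
  finally have "(c8*s17)*D > 0" using neg by linarith
  hence p8: "c8 > 0" using pos Dp by (simp add: zero_less_mult_iff)
  have E: "eqs s58 s38 s35 s89 s29 s28 s46 s26 s24 s710 s67 s17 s19 s15 s110 c"
  proof -
    have cv: "c 0 = 1" "c 1 = c1" "c 2 = c2" "c 3 = c3" "c 4 = c4" "c 5 = c5" "c 6 = c6"
      "c 7 = c7" "c 8 = c8" by (simp_all add: c_def)
    show ?thesis unfolding eqs_def cv using k1 k2 k3 k4 k5 k6 k7 k8
      by (intro conjI; linarith)
  qed
  have P: "\<forall>i<9. c i > 0" using p1 p8 by (simp add: all9 c_def)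
  have U: "\<exists>t. \<forall>i<9. d i = t * c i"
    if "eqs s58 s38 s35 s89 s29 s28 s46 s26 s24 s710 s67 s17 s19 s15 s110 d" for d
  proof (intro exI[of _ "d 0"])
    note e = that[unfolded eqs_def]
    have "d 1 * s29 = (d 0 * c1) * s29" using e k1 by (simp add: algebra_simps)
    hence d1: "d 1 = d 0 * c1" using pos by simp
    have "d 2 * s46 = (d 0 * c2) * s46" using e k2 d1 by (simp add: algebra_simps)
    hence d2: "d 2 = d 0 * c2" using pos by simp
    have "d 2 * s24 - d 3 * s710 = 0" using e by blast
    hence "d 3 * s710 = d 2 * s24" by simp
    also have "\<dots> = d 0 * (c2 * s24)" using d2 by simp
    also have "\<dots> = (d 0 * c3) * s710" unfolding k3[symmetric] by simp
    finally have "d 3 * s710 = (d 0 * c3) * s710" .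
    hence d3: "d 3 = d 0 * c3" using pos by simp
    have "d 4 * s17 = (d 0 * c4) * s17" using e k4 by (simp add: algebra_simps)
    hence d4: "d 4 = d 0 * c4" using pos by simp
    have "d 5 * s17 = (d 0 * c5) * s17" using e k5 d2 by (simp add: algebra_simps)
    hence d5: "d 5 = d 0 * c5" using pos by simp
    have "d 6 * s15 = (d 0 * c6) * s15" using e k6 d1 by (simp add: algebra_simps)
    hence d6: "d 6 = d 0 * c6" using pos by simp
    have "d 7 * s15 = (d 0 * c7) * s15" using e k7 d3 by (simp add: algebra_simps)
    hence d7: "d 7 = d 0 * c7" using pos by simp
    have "d 0 * s38 - d 6 * s19 - d 7 * s110 - d 8 * s17 = 0" using e by blast
    hence "d 8 * s17 = s38 * d 0 - s19 * d 6 - s110 * d 7" by (simp add: algebra_simps)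
    also have "\<dots> = d 0 * (s38 - c6 * s19 - c7 * s110)" using d6 d7 by (simp add: algebra_simps)
    also have "\<dots> = (d 0 * c8) * s17" unfolding k8[symmetric] by simp
    finally have "d 8 * s17 = (d 0 * c8) * s17" .
    hence d8: "d 8 = d 0 * c8" using pos by simp
    show "\<forall>i<9. d i = d 0 * c i" using d1 d2 d3 d4 d5 d6 d7 d8 by (simp add: all9 c_def)
  qed
  show ?thesis
  proof (rule exI[of _ c], intro conjI allI impI)
    show "eqs s58 s38 s35 s89 s29 s28 s46 s26 s24 s710 s67 s17 s19 s15 s110 c" by (rule E)
    show "\<And>i. i < 9 \<Longrightarrow> 0 < c i" using P by simp
    show "\<And>d. eqs s58 s38 s35 s89 s29 s28 s46 s26 s24 s710 s67 s17 s19 s15 s110 d \<Longrightarrow> \<exists>t. \<forall>i<9. d i = t * c i"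
      by (rule U)
  qed
qed

theorem mainTheorem4:
  fixes \<theta> :: "nat \<Rightarrow> real"
  assumes ord: "\<forall>(i, j, k) \<in> {(2,4,6), (1,5,9), (1,5,10), (1,5,7), (1,3,7), (1,4,7),
                              (3,5,8), (2,8,9), (6,7,10)}.
                 0 < \<theta> i \<and> \<theta> i < \<theta> j \<and> \<theta> j < \<theta> k \<and> \<theta> k < 180"
    and neg: "sdeg \<theta> 8 9 * sdeg \<theta> 1 10 * sdeg \<theta> 2 4 * sdeg \<theta> 3 5 * sdeg \<theta> 6 7
            + sdeg \<theta> 4 6 * sdeg \<theta> 1 9 * sdeg \<theta> 7 10 * sdeg \<theta> 3 5 * sdeg \<theta> 2 8
            - sdeg \<theta> 4 6 * sdeg \<theta> 3 8 * sdeg \<theta> 7 10 * sdeg \<theta> 2 9 * sdeg \<theta> 1 5 < 0"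
  shows "simplex 8 (S9 \<theta>)"
proof -
  have o: "0 < \<theta> 2" "\<theta> 2 < \<theta> 4" "\<theta> 4 < \<theta> 6" "\<theta> 6 < 180"
          "0 < \<theta> 1" "\<theta> 1 < \<theta> 5" "\<theta> 5 < \<theta> 9" "\<theta> 9 < 180" "\<theta> 5 < \<theta> 10" "\<theta> 10 < 180"
          "\<theta> 5 < \<theta> 7" "\<theta> 7 < 180" "\<theta> 1 < \<theta> 3" "\<theta> 3 < \<theta> 7" "\<theta> 1 < \<theta> 4" "\<theta> 4 < \<theta> 7"
          "0 < \<theta> 3" "\<theta> 3 < \<theta> 5" "\<theta> 5 < \<theta> 8" "\<theta> 8 < 180" "\<theta> 2 < \<theta> 8" "\<theta> 8 < \<theta> 9"
          "0 < \<theta> 6" "\<theta> 6 < \<theta> 7" "\<theta> 7 < \<theta> 10"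
    using ord by auto
  have pos: "0 < sdeg \<theta> 5 8" "0 < sdeg \<theta> 3 8" "0 < sdeg \<theta> 3 5" "0 < sdeg \<theta> 8 9"
    "0 < sdeg \<theta> 2 9" "0 < sdeg \<theta> 2 8" "0 < sdeg \<theta> 4 6" "0 < sdeg \<theta> 2 6" "0 < sdeg \<theta> 2 4"
    "0 < sdeg \<theta> 7 10" "0 < sdeg \<theta> 6 7" "0 < sdeg \<theta> 1 7" "0 < sdeg \<theta> 1 9" "0 < sdeg \<theta> 1 5"
    "0 < sdeg \<theta> 1 10"
    by (rule spos; use o in linarith)+
  define E where "E = eqs (sdeg \<theta> 5 8) (sdeg \<theta> 3 8) (sdeg \<theta> 3 5) (sdeg \<theta> 8 9) (sdeg \<theta> 2 9) (sdeg \<theta> 2 8)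
         (sdeg \<theta> 4 6) (sdeg \<theta> 2 6) (sdeg \<theta> 2 4) (sdeg \<theta> 7 10) (sdeg \<theta> 6 7) (sdeg \<theta> 1 7)
         (sdeg \<theta> 1 9) (sdeg \<theta> 1 5) (sdeg \<theta> 1 10)"
  have RD: "row_dependency 9 8 (S9 \<theta>) c \<longleftrightarrow> E c" for c
    unfolding row_dependency_def all8 col0 col1 col2 col3 col4 col5 col6 col7 E_def eqs_def
    by (rule refl)
  obtain c where h1: "E c" and h2: "\<forall>i<9. c i > 0" and h3: "\<forall>d. E d \<longrightarrow> (\<exists>t. \<forall>i<9. d i = t * c i)"
    using key[OF pos neg] unfolding E_def[symmetric] by (elim exE conjE) simp
  have n9: "(8::nat) + 1 = 9" by simp
  show ?thesis
    unfolding simplex_def n9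
  proof (intro exI[of _ c] conjI allI impI)
    show "row_dependency 9 8 (S9 \<theta>) c" using h1 by (rule RD[THEN iffD2])
    show "\<And>i. i < 9 \<Longrightarrow> 0 < c i" using h2 by blast
    show "\<exists>t. \<forall>i<9. d i = t * c i" if "row_dependency 9 8 (S9 \<theta>) d" for d
      by (rule h3[rule_format, OF RD[THEN iffD1, OF that]])
  qed
qed

end
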